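(* Let $k \geq 2$ and let $\Sigma_k$ be an alphabet with $k$ letters. For $n \ge 0$ let $p_k(n)$ be the number of palstars of length $2n$ over $\Sigma_k$ and $u_k(n)$ the number of unbordered strings of length $n$ over $\Sigma_k$, and define the formal power series $P_k(X) = \sum_{n \geq 0} p_k(n) X^n$ and $U_k(X) = \sum_{n\geq 0} u_k(n) X^n$. Then $$P_k(X) = \frac{1}{2 - U_k(X)}.$$
   Context: Let $P = \{ x x^R : x \in \Sigma_k^+\}$ be the set of nonempty even-length palindromes over $\Sigma_k$ (here $x^R$ is the reversal of $x$). A palstar is an element of $P^* = \bigcup_{i\ge 0} P^i$, i.e. a (possibly empty) concatenation of nonempty even-length palindromes; the empty string is a palstar, so $p_k(0)=1$. A nonempty string $x$ is a border of a string $y$ if $x \neq y$ and $x$ is both a prefix and a suffix of $y$; $y$ is unbordered if it has no border (so the empty string is unbordered and $u_k(0)=1$). *)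

theory Defs
  imports "HOL-Library.Sublist" "HOL-Computational_Algebra.Formal_Power_Series"
begin

inductive palstar :: "'a list \<Rightarrow> bool" where
  palstar_Nil: "palstar []"
| palstar_step: "x \<noteq> [] \<Longrightarrow> palstar w \<Longrightarrow> palstar (x @ rev x @ w)"

definition border :: "'a list \<Rightarrow> 'a list \<Rightarrow> bool" where
  "border x y \<longleftrightarrow> x \<noteq> [] \<and> x \<noteq> y \<and> prefix x y \<and> suffix x y"

definition unbordered :: "'a list \<Rightarrow> bool" where
  "unbordered y \<longleftrightarrow> \<not> (\<exists>x. border x y)"

definition pal_count :: "'a set \<Rightarrow> nat \<Rightarrow> nat" where
  "pal_count A n = card {w \<in> lists A. length w = 2 * n \<and> palstar w}"

definition unb_count :: "'a set \<Rightarrow> nat \<Rightarrow> nat" where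
  "unb_count A n = card {w \<in> lists A. length w = n \<and> unbordered w}"

end

theory Submission
  imports Defs
begin


lemma prefix_ext: "xs @ ys = zs @ ts \<Longrightarrow> length xs \<le> length zs \<Longrightarrow> \<exists>us. zs = xs @ us \<and> ys = us @ ts"
  by (induction xs arbitrary: zs) (auto simp: Cons_eq_append_conv)

lemma overlap:
  assumes "t @ b = b @ s" "length t < length b"
  shows "\<exists>r. b = t @ r \<and> b = r @ s"
  using prefix_ext[OF assms(1)] assms(2) by simp

definition ep :: "'a list \<Rightarrow> bool" where
  "ep w \<longleftrightarrow> w \<noteq> [] \<and> even (length w) \<and> rev w = w"

definition pprime :: "'a list \<Rightarrow> bool" where
  "pprime w \<longleftrightarrow> ep w \<and> \<not> (\<exists>p. ep p \<and> strict_prefix p w)"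

lemma pal_half:
  assumes "rev w = w" "length w = 2 * m"
  shows "w = take m w @ rev (take m w)"
proof -
  have "take m w @ drop m w = rev (drop m w) @ rev (take m w)"
    using assms(1) by (metis append_take_drop_id rev_append)
  moreover have "length (take m w) = length (rev (drop m w))" using assms(2) by simp
  ultimately have "drop m w = rev (take m w)" by (metis append_eq_append_conv)
  thus ?thesis by (metis append_take_drop_id)
qed

lemma ep_palstar: "ep w \<Longrightarrow> palstar w"
proof -
  assume "ep w"
  then obtain m where m: "length w = 2 * m" "rev w = w" "w \<noteq> []" unfolding ep_def by (auto elim: evenE)
  hence m0: "m > 0" by (cases m) auto
  have "w = take m w @ rev (take m w) @ []" using pal_half m by auto
  moreover have "take m w \<noteq> []" using m m0 by auto
  ultimately show ?thesis by (metis palstar.intros)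
qed

lemma palstar_append: "palstar u \<Longrightarrow> palstar v \<Longrightarrow> palstar (u @ v)"
  by (induction u rule: palstar.induct) (auto intro: palstar.intros)

lemma palstar_even: "palstar w \<Longrightarrow> even (length w)"
  by (induction w rule: palstar.induct) auto

lemma ep_decomp:
  assumes "ep w" "\<not> pprime w"
  shows "\<exists>p v. pprime p \<and> w = p @ v @ p \<and> rev v = v \<and> even (length v)"
proof -
  from assms obtain p0 where "ep p0 \<and> strict_prefix p0 w" unfolding pprime_def by blast
  then obtain p where p: "ep p" "strict_prefix p w"
    and pmin: "\<And>q. ep q \<and> strict_prefix q w \<Longrightarrow> length p \<le> length q"
    using ex_has_least_nat[of "\<lambda>q. ep q \<and> strict_prefix q w" p0 length] by blast
  have pp: "pprime p"
  proof -
    { fix q assume q: "ep q" "strict_prefix q p"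
      hence "strict_prefix q w" using p(2) by (meson prefix_order.less_trans)
      hence "length p \<le> length q" using pmin q by blast
      moreover have "length q < length p" using q(2) by (simp add: prefix_length_less)
      ultimately have False by simp }
    thus ?thesis using p unfolding pprime_def by blast
  qed
  obtain s where s: "w = p @ s" "s \<noteq> []" using p(2) by (auto simp: strict_prefix_def prefix_def)
  have rw: "rev w = w" "rev p = p" "even (length w)" "even (length p)" "p \<noteq> []"
    using assms(1) p(1) unfolding ep_def by auto
  have w2: "w = rev s @ p" using rw s by (metis rev_append)
  have le: "length p \<le> length s"
  proof (rule ccontr)
    assume "\<not> ?thesis"
    hence "length (rev s) < length p" by simp
    moreover have "rev s @ p = p @ s" using s w2 by simp
    ultimately obtain r where r: "p = rev s @ r" "p = r @ s" using overlap by blast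
    have "rev r = r"
    proof -
      have "rev p = rev r @ s" using r(1) by simp
      hence "rev r @ s = r @ s" using r(2) rw by simp
      thus ?thesis by simp
    qed
    moreover have "r \<noteq> []" using r s \<open>\<not> length p \<le> length s\<close> by auto
    moreover have "even (length r)"
    proof -
      have "length w = length p + length s" "length p = length s + length r" using s r by auto
      thus ?thesis using rw by auto
    qed
    ultimately have "ep r" unfolding ep_def by simp
    moreover have "strict_prefix r w"
    proof -
      have "w = r @ (s @ s)" using r(2) s(1) by simp
      thus ?thesis using s(2) by (simp add: strict_prefix_def)
    qed
    moreover have "length r < length p" using r s by simp
    ultimately show False using pmin by fastforce
  qed
  have eq: "p @ s = rev s @ p" using s(1) w2 by simp
  obtain v where v: "rev s = p @ v" "s = v @ p"
    using prefix_ext[OF eq] le by auto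
  hence "s = rev v @ p" using rw by (metis rev_append rev_rev_ident)
  hence w3: "w = p @ rev v @ p" using s by simp
  hence "rev w = p @ v @ p" using rw by simp
  hence "rev v = v" using w3 rw by simp
  moreover have "even (length v)" using w3 rw by auto
  ultimately show ?thesis using w3 pp by auto
qed

lemma card_split:
  fixes f :: "'b \<times> 'c \<Rightarrow> 'd"
  assumes S: "S = S0 \<union> (\<Union>i\<in>I. f ` (X i \<times> Y i))"
    and fin: "finite I" "finite S0" "\<And>i. i \<in> I \<Longrightarrow> finite (X i)" "\<And>i. i \<in> I \<Longrightarrow> finite (Y i)"
    and inj: "\<And>i j x y x' y'. i \<in> I \<Longrightarrow> j \<in> I \<Longrightarrow> x \<in> X i \<Longrightarrow> y \<in> Y i \<Longrightarrow> x' \<in> X j \<Longrightarrow> y' \<in> Y j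
               \<Longrightarrow> f (x, y) = f (x', y') \<Longrightarrow> i = j \<and> x = x' \<and> y = y'"
    and dis: "\<And>i x y. i \<in> I \<Longrightarrow> x \<in> X i \<Longrightarrow> y \<in> Y i \<Longrightarrow> f (x, y) \<notin> S0"
  shows "card S = card S0 + (\<Sum>i\<in>I. card (X i) * card (Y i))"
proof -
  have fi: "\<forall>i\<in>I. finite (f ` (X i \<times> Y i))" using fin by auto
  have d1: "\<forall>i\<in>I. \<forall>j\<in>I. i \<noteq> j \<longrightarrow> f ` (X i \<times> Y i) \<inter> f ` (X j \<times> Y j) = {}"
    using inj by fastforce
  have ci: "\<And>i. i \<in> I \<Longrightarrow> card (f ` (X i \<times> Y i)) = card (X i) * card (Y i)"
  proof -
    fix i assume i: "i \<in> I"
    have "inj_on f (X i \<times> Y i)"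
      unfolding inj_on_def using inj[OF i i] by fastforce
    thus "card (f ` (X i \<times> Y i)) = card (X i) * card (Y i)"
      by (simp add: card_image card_cartesian_product)
  qed
  have "card (\<Union>i\<in>I. f ` (X i \<times> Y i)) = (\<Sum>i\<in>I. card (f ` (X i \<times> Y i)))"
    using card_UN_disjoint[OF fin(1) fi d1] by simp
  also have "\<dots> = (\<Sum>i\<in>I. card (X i) * card (Y i))" using ci by simp
  finally have cu: "card (\<Union>i\<in>I. f ` (X i \<times> Y i)) = (\<Sum>i\<in>I. card (X i) * card (Y i))" .
  have "S0 \<inter> (\<Union>i\<in>I. f ` (X i \<times> Y i)) = {}" using dis by fastforce
  moreover have "finite (\<Union>i\<in>I. f ` (X i \<times> Y i))" using fin fi by blast
  ultimately have "card S = card S0 + card (\<Union>i\<in>I. f ` (X i \<times> Y i))"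
    using S fin(2) card_Un_disjoint by metis
  thus ?thesis using cu by simp
qed

lemma border_decomp:
  assumes "\<not> unbordered w"
  shows "\<exists>b v. unbordered b \<and> b \<noteq> [] \<and> w = b @ v @ b"
proof -
  from assms obtain b0 where "border b0 w" unfolding unbordered_def by blast
  then obtain b where b: "border b w" and bmin: "\<And>c. border c w \<Longrightarrow> length b \<le> length c"
    using ex_has_least_nat[of "\<lambda>c. border c w" b0 length] by blast
  have bne: "b \<noteq> []" "b \<noteq> w" "prefix b w" "suffix b w" using b unfolding border_def by auto
  have lbw: "length b < length w" using bne prefix_length_less strict_prefix_def by metis
  have ub: "unbordered b"
  proof (rule ccontr)
    assume "\<not> unbordered b"
    then obtain c where c: "border c b" unfolding unbordered_def by blast
    hence cc: "c \<noteq> []" "c \<noteq> b" "prefix c b" "suffix c b" unfolding border_def by auto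
    have lcb: "length c < length b" using cc prefix_length_less strict_prefix_def by metis
    have "c \<noteq> w" using lcb lbw by auto
    hence "border c w" unfolding border_def using cc bne
      by (meson prefix_order.trans suffix_order.trans)
    thus False using bmin lcb by fastforce
  qed
  obtain s where s: "w = b @ s" using bne prefixE by metis
  obtain t where t: "w = t @ b" using bne suffixE by metis
  have eq: "t @ b = b @ s" using s t by simp
  have le: "length b \<le> length t"
  proof (rule ccontr)
    assume "\<not> ?thesis"
    hence "length t < length b" by simp
    then obtain r where r: "b = t @ r" "b = r @ s" using overlap[OF eq] by blast
    have "t \<noteq> []" using t bne by auto
    moreover have "r \<noteq> []" using r \<open>\<not> length b \<le> length t\<close> by auto
    moreover have "prefix r b" using r(2) by (simp add: prefix_def)
    moreover have "suffix r b" using r(1) by (simp add: suffix_def)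
    moreover have "r \<noteq> b" using r(1) \<open>t \<noteq> []\<close> by auto
    ultimately have "border r b" unfolding border_def by blast
    thus False using ub unfolding unbordered_def by blast
  qed
  obtain v where "t = b @ v" "s = v @ b" using prefix_ext[of b s t b] eq le by auto
  thus ?thesis using s ub bne by auto
qed


unbundle fps_syntax

definition "W A n = {w \<in> lists A. length w = n}"
definition "UB A n = {w \<in> lists A. length w = n \<and> unbordered w}"
definition "E A n = {w \<in> lists A. length w = 2 * n \<and> rev w = w}"
definition "Q A n = {w \<in> lists A. length w = 2 * n \<and> pprime w}"
definition "PS A n = {w \<in> lists A. length w = 2 * n \<and> palstar w}"

lemma finW: "finite A \<Longrightarrow> finite (W A n)"
  unfolding W_def using finite_lists_length_eq[of A n] by (simp add: lists_eq_set)
lemma cardW: "finite A \<Longrightarrow> card (W A n) = card A ^ n"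
  unfolding W_def using card_lists_length_eq[of A n] by (simp add: lists_eq_set)
lemma finsub: "finite A \<Longrightarrow> S \<subseteq> W A n \<Longrightarrow> finite S"
  using finW finite_subset by blast

lemma finlen: "finite A \<Longrightarrow> finite {w \<in> lists A. length w = n \<and> P w}"
  by (rule finite_subset[OF _ finW[of A n]]) (auto simp: W_def)

lemma short_border:
  assumes "b \<noteq> []" "length b < length c" "prefix b w" "prefix c w" "suffix b w" "suffix c w"
  shows "border b c"
proof -
  have "prefix b c" using prefix_length_prefix[OF assms(3) assms(4)] assms(2) by simp
  moreover have "suffix b c" using suffix_length_suffix[OF assms(5) assms(6)] assms(2) by simp
  moreover have "b \<noteq> c" using assms by auto
  ultimately show ?thesis using assms unfolding border_def by blast
qed

lemma unb_unique:
  assumes "unbordered b" "unbordered c" "b \<noteq> []" "c \<noteq> []" "b @ v @ b = c @ v' @ c"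
  shows "b = c \<and> v = v'"
proof -
  have len: "length b = length c"
  proof (rule ccontr)
    assume ne: "length b \<noteq> length c"
    let ?w = "b @ v @ b"
    have pb: "prefix b ?w" "suffix b ?w" by (auto simp: prefix_def suffix_def)
    have pc: "prefix c ?w" "suffix c ?w" unfolding assms(5) by (auto simp: prefix_def suffix_def)
    show False
    proof (cases "length b < length c")
      case True
      then have "border b c" using short_border[OF assms(3) True pb(1) pc(1) pb(2) pc(2)] by simp
      thus False using assms(2) unfolding unbordered_def by blast
    next
      case False
      then have "length c < length b" using ne by simp
      then have "border c b" using short_border[OF assms(4) _ pc(1) pb(1) pc(2) pb(2)] by simp
      thus False using assms(1) unfolding unbordered_def by blast
    qed
  qed
  hence "b = c" using assms(5) append_eq_append_conv[of b "v @ b" c "v' @ c"] by simp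
  thus ?thesis using assms(5) by simp
qed

lemma U_rec:
  assumes A: "finite A"
  shows "card A ^ n = card (UB A n) + (\<Sum>i\<in>{1..n div 2}. card (UB A i) * card A ^ (n - 2 * i))"
proof -
  let ?f = "\<lambda>(b::'a list, v). b @ v @ b"
  have S: "W A n = UB A n \<union> (\<Union>i\<in>{1..n div 2}. ?f ` (UB A i \<times> W A (n - 2 * i)))"
  proof (intro equalityI subsetI)
    fix w assume w: "w \<in> W A n"
    show "w \<in> UB A n \<union> (\<Union>i\<in>{1..n div 2}. ?f ` (UB A i \<times> W A (n - 2 * i)))"
    proof (cases "unbordered w")
      case True thus ?thesis using w unfolding W_def UB_def by auto
    next
      case False
      then obtain b v where bv: "unbordered b" "b \<noteq> []" "w = b @ v @ b" using border_decomp by blast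
      let ?i = "length b"
      have i: "?i \<in> {1..n div 2}" using w bv unfolding W_def by (auto simp: Suc_le_eq)
      have "b \<in> UB A ?i" "v \<in> W A (n - 2 * ?i)" using w bv unfolding W_def UB_def by auto
      hence "w \<in> ?f ` (UB A ?i \<times> W A (n - 2 * ?i))" using bv(3) by (intro image_eqI[where x="(b,v)"]) auto
      thus ?thesis using i by blast
    qed
  next
    fix w assume "w \<in> UB A n \<union> (\<Union>i\<in>{1..n div 2}. ?f ` (UB A i \<times> W A (n - 2 * i)))"
    thus "w \<in> W A n" unfolding W_def UB_def by auto
  qed
  have f1: "finite {1..n div 2}" by simp
  have f2: "finite (UB A n)" unfolding UB_def by (rule finlen[OF A])
  have f3: "\<And>i. i \<in> {1..n div 2} \<Longrightarrow> finite (UB A i)" unfolding UB_def by (rule finlen[OF A])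
  have f4: "\<And>i. i \<in> {1..n div 2} \<Longrightarrow> finite (W A (n - 2 * i))" using finW[OF A] by blast
  have inj: "\<And>i j x y x' y'. i \<in> {1..n div 2} \<Longrightarrow> j \<in> {1..n div 2} \<Longrightarrow> x \<in> UB A i \<Longrightarrow>
         y \<in> W A (n - 2 * i) \<Longrightarrow> x' \<in> UB A j \<Longrightarrow> y' \<in> W A (n - 2 * j) \<Longrightarrow>
         ?f (x, y) = ?f (x', y') \<Longrightarrow> i = j \<and> x = x' \<and> y = y'"
  proof -
    fix i j x y x' y' assume h: "i \<in> {1..n div 2}" "j \<in> {1..n div 2}" "x \<in> UB A i"
       "y \<in> W A (n - 2 * i)" "x' \<in> UB A j" "y' \<in> W A (n - 2 * j)" "?f (x, y) = ?f (x', y')"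
    have "x \<noteq> []" "x' \<noteq> []" using h unfolding UB_def by auto
    hence "x = x' \<and> y = y'" using unb_unique[of x x' y y'] h(3,5,7) unfolding UB_def by auto
    thus "i = j \<and> x = x' \<and> y = y'" using h(3,5) unfolding UB_def by auto
  qed
  have dis: "\<And>i x y. i \<in> {1..n div 2} \<Longrightarrow> x \<in> UB A i \<Longrightarrow> y \<in> W A (n - 2 * i) \<Longrightarrow> ?f (x, y) \<notin> UB A n"
  proof -
    fix i x y assume h: "i \<in> {1..n div 2}" "x \<in> UB A i" "y \<in> W A (n - 2 * i)"
    hence "x \<noteq> []" unfolding UB_def by auto
    hence "border x (x @ y @ x)" unfolding border_def by (auto simp: prefix_def suffix_def)
    thus "?f (x, y) \<notin> UB A n" unfolding UB_def unbordered_def by auto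
  qed
  have "card (W A n) = card (UB A n) + (\<Sum>i\<in>{1..n div 2}. card (UB A i) * card (W A (n - 2 * i)))"
    by (rule card_split[OF S f1 f2 f3 f4 inj dis])
  thus ?thesis using cardW[OF A] by simp
qed


lemma pprime_ep: "pprime p \<Longrightarrow> ep p" unfolding pprime_def by simp

lemma pprime_unique:
  assumes "pprime p" "pprime q" "p @ x = q @ y"
  shows "p = q \<and> x = y"
proof -
  have gen: "False" if "pprime a" "pprime b" "a @ x' = b @ y'" "length a < length b" for a b x' y' :: "'a list"
  proof -
    have pa: "prefix a (b @ y')" using that(3) prefixI by metis
    have "prefix a b" using prefix_length_prefix[OF pa _ less_imp_le[OF that(4)]] by simp
    hence "strict_prefix a b" using that(4) by (auto simp: strict_prefix_def)
    thus False using that(1,2) unfolding pprime_def by blast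
  qed
  have "length p = length q"
  proof (rule ccontr)
    assume "length p \<noteq> length q"
    hence "length p < length q \<or> length q < length p" by auto
    thus False using gen[OF assms(1,2,3)] gen[OF assms(2,1) assms(3)[symmetric]] by blast
  qed
  thus ?thesis using assms(3) append_eq_append_conv[of p x q y] by simp
qed

lemma cardE:
  assumes A: "finite A"
  shows "card (E A n) = card A ^ n"
proof -
  have "E A n = (\<lambda>x. x @ rev x) ` W A n"
  proof (intro equalityI subsetI)
    fix w assume w: "w \<in> E A n"
    hence "w = take n w @ rev (take n w)" using pal_half unfolding E_def by blast
    moreover have "take n w \<in> W A n" using w unfolding E_def W_def
      by (auto dest: in_set_takeD)
    ultimately show "w \<in> (\<lambda>x. x @ rev x) ` W A n" by (intro image_eqI[where x="take n w"])
  next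
    fix w assume "w \<in> (\<lambda>x. x @ rev x) ` W A n"
    thus "w \<in> E A n" unfolding E_def W_def by auto
  qed
  moreover have "inj_on (\<lambda>x. x @ rev x) (W A n)"
  proof (rule inj_onI)
    fix x y assume "x \<in> W A n" "y \<in> W A n" "x @ rev x = y @ rev y"
    thus "x = y" using append_eq_append_conv[of x "rev x" y "rev y"] unfolding W_def by simp
  qed
  ultimately show ?thesis using cardW[OF A] by (simp add: card_image)
qed

lemma Q_rec:
  assumes A: "finite A" and n: "n \<ge> 1"
  shows "card A ^ n = card (Q A n) + (\<Sum>i\<in>{1..n div 2}. card (Q A i) * card A ^ (n - 2 * i))"
proof -
  let ?f = "\<lambda>(b::'a list, v). b @ v @ b"
  have S: "E A n = Q A n \<union> (\<Union>i\<in>{1..n div 2}. ?f ` (Q A i \<times> E A (n - 2 * i)))"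
  proof (intro equalityI subsetI)
    fix w assume w: "w \<in> E A n"
    have epw: "ep w" using w n unfolding E_def ep_def by auto
    show "w \<in> Q A n \<union> (\<Union>i\<in>{1..n div 2}. ?f ` (Q A i \<times> E A (n - 2 * i)))"
    proof (cases "pprime w")
      case True thus ?thesis using w unfolding E_def Q_def by auto
    next
      case False
      then obtain p v where pv: "pprime p" "w = p @ v @ p" "rev v = v" "even (length v)"
        using ep_decomp[OF epw] by blast
      have "ep p" using pv pprime_ep by blast
      hence ep2: "even (length p)" "p \<noteq> []" unfolding ep_def by auto
      then obtain i where i0: "length p = 2 * i" by (auto elim: evenE)
      have i: "length p = 2 * i" "i \<ge> 1" using i0 ep2(2) by (cases i, auto)+
      have lw: "length w = 2 * n" using w unfolding E_def by simp
      have "length w = 2 * i + length v + 2 * i" using pv(2) i by simp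
      hence "2 * i \<le> n" using lw by linarith
      hence "i \<le> n div 2" by presburger
      hence iI: "i \<in> {1..n div 2}" using i by simp
      have "p \<in> Q A i" "v \<in> E A (n - 2 * i)" using w pv i lw unfolding E_def Q_def by auto
      hence "w \<in> ?f ` (Q A i \<times> E A (n - 2 * i))" using pv(2) by (intro image_eqI[where x="(p,v)"]) auto
      thus ?thesis using iI by blast
    qed
  next
    fix w assume "w \<in> Q A n \<union> (\<Union>i\<in>{1..n div 2}. ?f ` (Q A i \<times> E A (n - 2 * i)))"
    thus "w \<in> E A n" unfolding E_def Q_def pprime_def ep_def by auto
  qed
  have f1: "finite {1..n div 2}" by simp
  have f2: "finite (Q A n)" unfolding Q_def by (rule finlen[OF A])
  have f3: "\<And>i. i \<in> {1..n div 2} \<Longrightarrow> finite (Q A i)" unfolding Q_def by (rule finlen[OF A])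
  have f4: "\<And>i. i \<in> {1..n div 2} \<Longrightarrow> finite (E A (n - 2 * i))" unfolding E_def by (rule finlen[OF A])
  have inj: "\<And>i j x y x' y'. i \<in> {1..n div 2} \<Longrightarrow> j \<in> {1..n div 2} \<Longrightarrow> x \<in> Q A i \<Longrightarrow>
         y \<in> E A (n - 2 * i) \<Longrightarrow> x' \<in> Q A j \<Longrightarrow> y' \<in> E A (n - 2 * j) \<Longrightarrow>
         ?f (x, y) = ?f (x', y') \<Longrightarrow> i = j \<and> x = x' \<and> y = y'"
  proof -
    fix i j x y x' y' assume h: "i \<in> {1..n div 2}" "j \<in> {1..n div 2}" "x \<in> Q A i"
       "y \<in> E A (n - 2 * i)" "x' \<in> Q A j" "y' \<in> E A (n - 2 * j)" "?f (x, y) = ?f (x', y')"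
    have "x = x' \<and> y @ x = y' @ x'" using pprime_unique[of x x' "y @ x" "y' @ x'"] h(3,5,7)
      unfolding Q_def by auto
    thus "i = j \<and> x = x' \<and> y = y'" using h(3,5) unfolding Q_def by auto
  qed
  have dis: "\<And>i x y. i \<in> {1..n div 2} \<Longrightarrow> x \<in> Q A i \<Longrightarrow> y \<in> E A (n - 2 * i) \<Longrightarrow> ?f (x, y) \<notin> Q A n"
  proof -
    fix i x y assume h: "i \<in> {1..n div 2}" "x \<in> Q A i" "y \<in> E A (n - 2 * i)"
    hence ex: "ep x" unfolding Q_def using pprime_ep by blast
    hence "strict_prefix x (x @ y @ x)" unfolding ep_def by (auto simp: strict_prefix_def)
    hence "\<not> pprime (x @ y @ x)" using ex unfolding pprime_def by blast
    thus "?f (x, y) \<notin> Q A n" unfolding Q_def by auto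
  qed
  have "card (E A n) = card (Q A n) + (\<Sum>i\<in>{1..n div 2}. card (Q A i) * card (E A (n - 2 * i)))"
    by (rule card_split[OF S f1 f2 f3 f4 inj dis])
  thus ?thesis using cardE[OF A] by simp
qed


lemma first_factor:
  assumes "ep e" shows "\<exists>q r. pprime q \<and> e = q @ r \<and> palstar r"
proof (cases "pprime e")
  case True thus ?thesis by (auto intro: palstar.intros)
next
  case False
  then obtain p v where pv: "pprime p" "e = p @ v @ p" "rev v = v" "even (length v)"
    using ep_decomp[OF assms] by blast
  have pp: "palstar p" using pv(1) pprime_ep ep_palstar by blast
  have "palstar (v @ p)"
  proof (cases "v = []")
    case True thus ?thesis using pp by simp
  next
    case False
    hence "ep v" using pv unfolding ep_def by simp
    thus ?thesis using ep_palstar palstar_append pp by blast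
  qed
  thus ?thesis using pv by blast
qed

lemma P_rec:
  assumes A: "finite A" and n: "n \<ge> 1"
  shows "card (PS A n) = (\<Sum>i\<in>{1..n}. card (Q A i) * card (PS A (n - i)))"
proof -
  let ?f = "\<lambda>(b::'a list, v). b @ v"
  have S: "PS A n = {} \<union> (\<Union>i\<in>{1..n}. ?f ` (Q A i \<times> PS A (n - i)))"
  proof (intro equalityI subsetI)
    fix w assume w: "w \<in> PS A n"
    have lw: "length w = 2 * n" "palstar w" using w unfolding PS_def by auto
    have wne: "w \<noteq> []" using lw n by auto
    have "\<exists>x w0. x \<noteq> [] \<and> palstar w0 \<and> w = x @ rev x @ w0"
      using lw(2) wne by (cases rule: palstar.cases) auto
    then obtain x w0 where xw: "x \<noteq> []" "palstar w0" "w = x @ rev x @ w0" by blast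
    have "ep (x @ rev x)" using xw unfolding ep_def by auto
    then obtain q r where qr: "pprime q" "x @ rev x = q @ r" "palstar r" using first_factor by blast
    have wq: "w = q @ (r @ w0)" using xw qr by simp
    have prw: "palstar (r @ w0)" using qr xw palstar_append by blast
    have "ep q" using qr pprime_ep by blast
    hence ep2: "even (length q)" "q \<noteq> []" unfolding ep_def by auto
    then obtain i where i0: "length q = 2 * i" by (auto elim: evenE)
    have i: "i \<ge> 1" using i0 ep2(2) by (cases i, auto)
    have "even (length (r @ w0))" using palstar_even[OF prw] .
    define j where "j = length (r @ w0) div 2"
    have j: "length (r @ w0) = 2 * j" using \<open>even (length (r @ w0))\<close> unfolding j_def by simp
    have "2 * n = 2 * i + 2 * j" using lw wq i0 j by simp
    hence ij: "j = n - i" "i \<le> n" by auto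
    have "q \<in> Q A i" "r @ w0 \<in> PS A (n - i)" using w wq qr prw i0 j ij unfolding Q_def PS_def by auto
    hence "w \<in> ?f ` (Q A i \<times> PS A (n - i))" using wq by (intro image_eqI[where x="(q, r @ w0)"]) auto
    thus "w \<in> {} \<union> (\<Union>i\<in>{1..n}. ?f ` (Q A i \<times> PS A (n - i)))" using i ij by auto
  next
    fix w assume "w \<in> {} \<union> (\<Union>i\<in>{1..n}. ?f ` (Q A i \<times> PS A (n - i)))"
    then obtain i q r where h: "i \<in> {1..n}" "q \<in> Q A i" "r \<in> PS A (n - i)" "w = q @ r" by auto
    have "palstar q" using h(2) unfolding Q_def using pprime_ep ep_palstar by blast
    hence "palstar w" using h palstar_append unfolding PS_def by blast
    thus "w \<in> PS A n" using h unfolding PS_def Q_def by auto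
  qed
  have f1: "finite {1..n}" by simp
  have f2: "finite ({} :: 'a list set)" by simp
  have f3: "\<And>i. i \<in> {1..n} \<Longrightarrow> finite (Q A i)" unfolding Q_def by (rule finlen[OF A])
  have f4: "\<And>i. i \<in> {1..n} \<Longrightarrow> finite (PS A (n - i))" unfolding PS_def by (rule finlen[OF A])
  have inj: "\<And>i j x y x' y'. i \<in> {1..n} \<Longrightarrow> j \<in> {1..n} \<Longrightarrow> x \<in> Q A i \<Longrightarrow>
         y \<in> PS A (n - i) \<Longrightarrow> x' \<in> Q A j \<Longrightarrow> y' \<in> PS A (n - j) \<Longrightarrow>
         ?f (x, y) = ?f (x', y') \<Longrightarrow> i = j \<and> x = x' \<and> y = y'"
  proof -
    fix i j x y x' y' assume h: "i \<in> {1..n}" "j \<in> {1..n}" "x \<in> Q A i"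
       "y \<in> PS A (n - i)" "x' \<in> Q A j" "y' \<in> PS A (n - j)" "?f (x, y) = ?f (x', y')"
    have "x = x' \<and> y = y'" using pprime_unique[of x x' y y'] h(3,5,7)
      unfolding Q_def by auto
    thus "i = j \<and> x = x' \<and> y = y'" using h(3,5) unfolding Q_def by auto
  qed
  have dis: "\<And>i x y. i \<in> {1..n} \<Longrightarrow> x \<in> Q A i \<Longrightarrow> y \<in> PS A (n - i) \<Longrightarrow> ?f (x, y) \<notin> {}"
    by simp
  have "card (PS A n) = card ({} :: 'a list set) + (\<Sum>i\<in>{1..n}. card (Q A i) * card (PS A (n - i)))"
    by (rule card_split[OF S f1 f2 f3 f4 inj dis])
  thus ?thesis by simp
qed

lemma PS0: "card (PS A 0) = 1"
proof -
  have "PS A 0 = {[]}" unfolding PS_def by (auto intro: palstar.intros)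
  thus ?thesis by simp
qed

lemma UB0: "card (UB A 0) = 1"
proof -
  have "UB A 0 = {[]}" unfolding UB_def unbordered_def border_def by auto
  thus ?thesis by simp
qed

lemma Q_eq_UB:
  assumes A: "finite A"
  shows "n \<ge> 1 \<Longrightarrow> card (Q A n) = card (UB A n)"
proof (induction n rule: less_induct)
  case (less n)
  have "(\<Sum>i\<in>{1..n div 2}. card (Q A i) * card A ^ (n - 2 * i))
      = (\<Sum>i\<in>{1..n div 2}. card (UB A i) * card A ^ (n - 2 * i))"
  proof (rule sum.cong)
    fix i assume "i \<in> {1..n div 2}"
    hence "i < n" "i \<ge> 1" using less.prems by auto
    thus "card (Q A i) * card A ^ (n - 2 * i) = card (UB A i) * card A ^ (n - 2 * i)"
      using less.IH by simp
  qed simp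
  thus ?case using U_rec[OF A, of n] Q_rec[OF A less.prems] by linarith
qed


theorem theorem2:
  fixes A :: "'a set" and k :: nat
  assumes "finite A" and "card A = k" and "k \<ge> 2"
  shows "(Abs_fps (\<lambda>n. of_nat (pal_count A n)) :: rat fps)
           = 1 / (2 - Abs_fps (\<lambda>n. of_nat (unb_count A n)))"
proof -
  define p where "p n = pal_count A n" for n
  define u where "u n = unb_count A n" for n
  have pP: "p n = card (PS A n)" for n unfolding p_def pal_count_def PS_def by simp
  have uU: "u n = card (UB A n)" for n unfolding u_def unb_count_def UB_def by simp
  have p0: "p 0 = 1" using PS0 pP by simp
  have u0: "u 0 = 1" using UB0 uU by simp
  have prec: "p n = (\<Sum>i\<in>{1..n}. u i * p (n - i))" if "n \<ge> 1" for n
  proof -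
    have "(\<Sum>i\<in>{1..n}. card (Q A i) * card (PS A (n - i))) = (\<Sum>i\<in>{1..n}. u i * p (n - i))"
      by (rule sum.cong) (auto simp: Q_eq_UB[OF assms(1)] pP uU)
    thus ?thesis using P_rec[OF assms(1) that] pP[of n] by simp
  qed
  define Pf :: "rat fps" where "Pf = Abs_fps (\<lambda>n. of_nat (p n))"
  define Uf :: "rat fps" where "Uf = Abs_fps (\<lambda>n. of_nat (u n))"
  have key: "(2 - Uf) * Pf = 1"
  proof (rule fps_ext)
    fix n
    have c: "(2 - Uf) $ i = (if i = 0 then 2 else 0) - of_nat (u i)" for i
      unfolding Uf_def by (simp add: fps_numeral_nth)
    have "((2 - Uf) * Pf) $ n = (\<Sum>i=0..n. ((if i = 0 then 2 else 0) - of_nat (u i)) * of_nat (p (n - i)))"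
      unfolding fps_mult_nth c Pf_def by simp
    also have "\<dots> = (\<Sum>i=0..n. (if i = 0 then 2 else 0) * (of_nat (p (n - i)) :: rat))
                     - (\<Sum>i=0..n. of_nat (u i) * of_nat (p (n - i)))"
      by (simp add: sum_subtractf left_diff_distrib)
    also have "(\<Sum>i=0..n. (if i = 0 then 2 else 0) * (of_nat (p (n - i)) :: rat)) = 2 * of_nat (p n)"
      by (simp add: sum.atLeast_Suc_atMost)
    also have "(\<Sum>i=0..n. of_nat (u i) * (of_nat (p (n - i)) :: rat))
             = of_nat (p n) + (\<Sum>i=1..n. of_nat (u i) * of_nat (p (n - i)))"
      using u0 by (simp add: sum.atLeast_Suc_atMost)
    finally have e: "((2 - Uf) * Pf) $ n = of_nat (p n) - (\<Sum>i=1..n. of_nat (u i) * of_nat (p (n - i)))"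
      by simp
    show "((2 - Uf) * Pf) $ n = (1 :: rat fps) $ n"
    proof (cases "n = 0")
      case True thus ?thesis using e p0 by simp
    next
      case False
      hence "(of_nat (p n) :: rat) = (\<Sum>i=1..n. of_nat (u i) * of_nat (p (n - i)))"
        using prec[of n] by (simp add: of_nat_sum[symmetric])
      thus ?thesis using e False by simp
    qed
  qed
  have "inverse (2 - Uf) = Pf" by (rule fps_inverse_unique[OF key])
  moreover have "(2 - Uf) $ 0 \<noteq> 0" unfolding Uf_def using u0 by simp
  ultimately have "1 / (2 - Uf) = Pf" using fps_divide_unit[of "2 - Uf" 1] by simp
  thus ?thesis unfolding Pf_def Uf_def p_def u_def by simp
qed

end
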